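(* For a graph $G$ and integer $\tau\ge 1$ define $$Q_{\mathrm{Del\text{-}N}}(G,\tau)=-\min\{\,|V(G)|-|V(G^* )| : G^*\subseteq G,\ \deg(G^* )\le\tau\,\},$$ the negative of the minimum number of nodes whose deletion (with incident edges) leaves maximum degree at most $\tau$. Then: (1) for fixed $G$, $Q_{\mathrm{Del\text{-}N}}(G,\tau)$ is non-decreasing in $\tau$ and equals $0$ for $\tau\ge\deg(G)$; (2) for any node-neighboring graphs $G,G'$, $|Q_{\mathrm{Del\text{-}N}}(G,\tau)-Q_{\mathrm{Del\text{-}N}}(G',\tau)|\le1$ for all $\tau$; (3) for node-neighboring $G,G'$ with $G\subseteq G'$, $Q_{\mathrm{Del\text{-}N}}(G,\tau)\ge Q_{\mathrm{Del\text{-}N}}(G',\tau)$ for all $\tau$.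
   Context: Graphs are finite, simple, undirected; $\deg(G)$ is the maximum degree. For graphs $H,G$, $H\subseteq G$ means $H$ is obtained from $G$ by deleting a (possibly empty) set of nodes together with all edges incident to them. Two graphs $G,G'$ are node-neighboring if one is obtained from the other by deleting a single node together with its incident edges. *)

theory Defs
  imports Main
begin

text \<open>A graph is a pair (V, E) of a vertex set and a set of edges, each edge a
two-element subset of V.  Finite, simple, undirected.\<close>

type_synonym 'a graph = "'a set \<times> 'a set set"

definition verts :: "'a graph \<Rightarrow> 'a set" where "verts G = fst G"
definition edges :: "'a graph \<Rightarrow> 'a set set" where "edges G = snd G"

definition graph :: "'a graph \<Rightarrow> bool" where
  "graph G \<longleftrightarrow> finite (verts G) \<and>
     (\<forall>e\<in>edges G. \<exists>u v. u \<noteq> v \<and> e = {u, v} \<and> u \<in> verts G \<and> v \<in> verts G)"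

definition degree :: "'a graph \<Rightarrow> 'a \<Rightarrow> nat" where
  "degree G v = card {e \<in> edges G. v \<in> e}"

definition max_degree :: "'a graph \<Rightarrow> nat" where
  "max_degree G = (if verts G = {} then 0 else Max (degree G ` verts G))"

definition induced_sub :: "'a graph \<Rightarrow> 'a set \<Rightarrow> 'a graph" where
  "induced_sub G S = (S, {e \<in> edges G. e \<subseteq> S})"

text \<open>H \<subseteq> G in the paper's sense: H obtained from G by deleting a set of nodes.\<close>
definition node_subgraph :: "'a graph \<Rightarrow> 'a graph \<Rightarrow> bool" where
  "node_subgraph H G \<longleftrightarrow> (\<exists>S\<subseteq>verts G. H = induced_sub G S)"

definition delete_node :: "'a graph \<Rightarrow> 'a \<Rightarrow> 'a graph" where
  "delete_node G v = induced_sub G (verts G - {v})"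

definition node_neighboring :: "'a graph \<Rightarrow> 'a graph \<Rightarrow> bool" where
  "node_neighboring G G' \<longleftrightarrow>
     (\<exists>v\<in>verts G. G' = delete_node G v) \<or> (\<exists>v\<in>verts G'. G = delete_node G' v)"

definition Q_del_N :: "'a graph \<Rightarrow> nat \<Rightarrow> int" where
  "Q_del_N G \<tau> = - int (Min {card (verts G) - card (verts H) | H.
       node_subgraph H G \<and> max_degree H \<le> \<tau>})"

end

theory Submission
  imports Defs
begin

definition FS :: "'a graph \<Rightarrow> nat \<Rightarrow> nat set" where
  "FS G \<tau> = {card (verts G) - card (verts H) | H.
       node_subgraph H G \<and> max_degree H \<le> \<tau>}"

lemma Q_FS: "Q_del_N G \<tau> = - int (Min (FS G \<tau>))"
  unfolding Q_del_N_def FS_def by simp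

lemma FS_eq: "FS G \<tau> = {card (verts G) - card S | S. S \<subseteq> verts G \<and> max_degree (induced_sub G S) \<le> \<tau>}"
  unfolding FS_def node_subgraph_def by (auto simp: verts_def induced_sub_def)

lemma edges_sub: "graph G \<Longrightarrow> e \<in> edges G \<Longrightarrow> e \<subseteq> verts G"
  unfolding graph_def by fastforce

lemma fin_edges: "graph G \<Longrightarrow> finite (edges G)"
proof -
  assume g: "graph G"
  have "edges G \<subseteq> Pow (verts G)" using edges_sub[OF g] by blast
  moreover have "finite (verts G)" using g graph_def by blast
  ultimately show ?thesis by (meson finite_Pow_iff finite_subset)
qed

lemma FS_finite: "finite (FS G \<tau>)"
proof -
  have "FS G \<tau> \<subseteq> {..card (verts G)}" unfolding FS_eq by auto
  thus ?thesis using finite_subset by blast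
qed

lemma maxdeg_empty: "max_degree (induced_sub G {}) \<le> \<tau>"
  unfolding max_degree_def induced_sub_def verts_def by simp

lemma Min_le: "S \<subseteq> verts G \<Longrightarrow> max_degree (induced_sub G S) \<le> \<tau> \<Longrightarrow>
   Min (FS G \<tau>) \<le> card (verts G) - card S"
  apply (rule Min_le[OF FS_finite]) unfolding FS_eq by blast

lemma Min_ex: "\<exists>S. S \<subseteq> verts G \<and> max_degree (induced_sub G S) \<le> \<tau> \<and>
   Min (FS G \<tau>) = card (verts G) - card S"
proof -
  have "FS G \<tau> \<noteq> {}" unfolding FS_eq using maxdeg_empty by blast
  hence "Min (FS G \<tau>) \<in> FS G \<tau>" using FS_finite Min_in by blast
  thus ?thesis unfolding FS_eq by blast
qed

lemma deg_mono: assumes g: "graph G" and "T \<subseteq> S"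
  shows "degree (induced_sub G T) w \<le> degree (induced_sub G S) w"
proof -
  have "finite {e \<in> edges G. e \<subseteq> S \<and> w \<in> e}" using fin_edges[OF g] by simp
  moreover have "{e \<in> edges G. e \<subseteq> T \<and> w \<in> e} \<subseteq> {e \<in> edges G. e \<subseteq> S \<and> w \<in> e}"
    using assms(2) by blast
  ultimately have "card {e \<in> edges G. e \<subseteq> T \<and> w \<in> e} \<le> card {e \<in> edges G. e \<subseteq> S \<and> w \<in> e}"
    by (rule card_mono)
  thus ?thesis unfolding degree_def induced_sub_def edges_def
    by (simp add: conj_assoc)
qed

lemma maxdeg_mono: assumes g: "graph G" and ts: "T \<subseteq> S" and sv: "S \<subseteq> verts G"
  shows "max_degree (induced_sub G T) \<le> max_degree (induced_sub G S)"
proof (cases "T = {}")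
  case True thus ?thesis unfolding max_degree_def induced_sub_def verts_def by simp
next
  case False
  have "finite (verts G)" using g unfolding graph_def by (rule conjunct1)
  hence fs: "finite S" using sv by (rule finite_subset[rotated])
  have vT: "verts (induced_sub G T) = T" and vS: "verts (induced_sub G S) = S"
    unfolding induced_sub_def verts_def by auto
  have "Max (degree (induced_sub G T) ` T) \<le> Max (degree (induced_sub G S) ` S)"
  proof (rule Max.boundedI)
    show "finite (degree (induced_sub G T) ` T)" using fs ts finite_subset by blast
    show "degree (induced_sub G T) ` T \<noteq> {}" using False by simp
    fix x assume "x \<in> degree (induced_sub G T) ` T"
    then obtain w where w: "w \<in> T" "x = degree (induced_sub G T) w" by blast
    have "x \<le> degree (induced_sub G S) w" using deg_mono[OF g ts] w by simp
    also have "\<dots> \<le> Max (degree (induced_sub G S) ` S)"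
      using fs w ts by (intro Max_ge) auto
    finally show "x \<le> Max (degree (induced_sub G S) ` S)" .
  qed
  moreover have "S \<noteq> {}" using False ts by blast
  ultimately show ?thesis using False unfolding max_degree_def vT vS by simp
qed

lemma induced_induced: "B \<subseteq> A \<Longrightarrow> induced_sub (induced_sub G A) B = induced_sub G B"
  unfolding induced_sub_def edges_def by auto

lemma verts_del: "verts (delete_node G v) = verts G - {v}"
  unfolding delete_node_def induced_sub_def verts_def by simp

lemma del_bounds:
  assumes g: "graph G" and v: "v \<in> verts G"
  shows "Min (FS (delete_node G v) \<tau>) \<le> Min (FS G \<tau>)"
    and "Min (FS G \<tau>) \<le> Min (FS (delete_node G v) \<tau>) + 1"
proof -
  have fv: "finite (verts G)" using g unfolding graph_def by (rule conjunct1)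
  have vd: "verts (delete_node G v) = verts G - {v}" by (rule verts_del)
  have cv: "card (verts (delete_node G v)) = card (verts G) - 1"
    by (simp add: vd v fv)
  obtain S where S: "S \<subseteq> verts G" "max_degree (induced_sub G S) \<le> \<tau>"
     "Min (FS G \<tau>) = card (verts G) - card S" using Min_ex[of G \<tau>] by blast
  have fS: "finite S" using fv S(1) by (rule finite_subset[rotated])
  have sv: "S - {v} \<subseteq> verts G - {v}" using S(1) by blast
  have e1: "induced_sub (delete_node G v) (S - {v}) = induced_sub G (S - {v})"
    unfolding delete_node_def by (rule induced_induced[OF sv])
  have "max_degree (induced_sub G (S - {v})) \<le> max_degree (induced_sub G S)"
    by (rule maxdeg_mono[OF g Diff_subset S(1)])
  hence md: "max_degree (induced_sub (delete_node G v) (S - {v})) \<le> \<tau>"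
    using S(2) e1 by simp
  have sv2: "S - {v} \<subseteq> verts (delete_node G v)" using sv vd by simp
  have m1: "Min (FS (delete_node G v) \<tau>) \<le> card (verts (delete_node G v)) - card (S - {v})"
    by (rule Min_le[OF sv2 md])
  have c1: "card S \<le> card (verts G)" using fv S(1) by (rule card_mono)
  have c2: "card (S - {v}) \<ge> card S - 1" using fS by (cases "v \<in> S") (simp_all add: card_Diff_singleton)
  show "Min (FS (delete_node G v) \<tau>) \<le> Min (FS G \<tau>)" using m1 c1 c2 S(3) cv by linarith
  obtain T where T: "T \<subseteq> verts (delete_node G v)" "max_degree (induced_sub (delete_node G v) T) \<le> \<tau>"
     "Min (FS (delete_node G v) \<tau>) = card (verts (delete_node G v)) - card T" using Min_ex[of "delete_node G v" \<tau>] by blast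
  have TV: "T \<subseteq> verts G" using T(1) vd by auto
  have T2: "T \<subseteq> verts G - {v}" using T(1) vd by simp
  have e2: "induced_sub (delete_node G v) T = induced_sub G T"
    unfolding delete_node_def by (rule induced_induced[OF T2])
  have md2: "max_degree (induced_sub G T) \<le> \<tau>" using T(2) e2 by simp
  have m2: "Min (FS G \<tau>) \<le> card (verts G) - card T" by (rule Min_le[OF TV md2])
  have "finite (verts G - {v})" using fv by simp
  hence "card T \<le> card (verts G - {v})" using T2 by (rule card_mono)
  hence c3: "card T \<le> card (verts G) - 1" using v fv by simp
  show "Min (FS G \<tau>) \<le> Min (FS (delete_node G v) \<tau>) + 1" using m2 c3 T(3) cv by linarith
qed

lemma induced_all: "graph G \<Longrightarrow> induced_sub G (verts G) = G"
  unfolding induced_sub_def using edges_sub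
  by (metis (no_types, lifting) Collect_cong Collect_mem_eq edges_def prod.collapse verts_def)

theorem mainTheorem4:
  fixes G G' :: "'a graph"
  assumes "graph G" and "graph G'"
  shows "(\<forall>\<tau>1 \<tau>2. 1 \<le> \<tau>1 \<longrightarrow> \<tau>1 \<le> \<tau>2 \<longrightarrow> Q_del_N G \<tau>1 \<le> Q_del_N G \<tau>2)
       \<and> (\<forall>\<tau>. 1 \<le> \<tau> \<longrightarrow> max_degree G \<le> \<tau> \<longrightarrow> Q_del_N G \<tau> = 0)
       \<and> (node_neighboring G G' \<longrightarrow>
            (\<forall>\<tau>. 1 \<le> \<tau> \<longrightarrow> \<bar>Q_del_N G \<tau> - Q_del_N G' \<tau>\<bar> \<le> 1))
       \<and> (node_neighboring G G' \<and> node_subgraph G G' \<longrightarrow>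
            (\<forall>\<tau>. 1 \<le> \<tau> \<longrightarrow> Q_del_N G \<tau> \<ge> Q_del_N G' \<tau>))"
proof (intro conjI allI impI)
  fix t1 t2 :: nat assume "t1 \<le> t2"
  obtain S where S: "S \<subseteq> verts G" "max_degree (induced_sub G S) \<le> t1"
     "Min (FS G t1) = card (verts G) - card S" using Min_ex[of G t1] by blast
  have "Min (FS G t2) \<le> Min (FS G t1)" using Min_le[OF S(1), of t2] S(2,3) \<open>t1 \<le> t2\<close> by simp
  thus "Q_del_N G t1 \<le> Q_del_N G t2" unfolding Q_FS by simp
next
  fix t :: nat assume "max_degree G \<le> t"
  hence "Min (FS G t) \<le> card (verts G) - card (verts G)"
    using Min_le[of "verts G" G t] induced_all[OF assms(1)] by simp
  thus "Q_del_N G t = 0" unfolding Q_FS by simp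
next
  fix t :: nat assume nb: "node_neighboring G G'"
  show "\<bar>Q_del_N G t - Q_del_N G' t\<bar> \<le> 1"
    using nb unfolding node_neighboring_def
  proof
    assume "\<exists>v\<in>verts G. G' = delete_node G v"
    then obtain v where "v \<in> verts G" "G' = delete_node G v" by blast
    thus ?thesis using del_bounds[OF assms(1), of v t] by (simp add: Q_FS abs_le_iff)
  next
    assume "\<exists>v\<in>verts G'. G = delete_node G' v"
    then obtain v where "v \<in> verts G'" "G = delete_node G' v" by blast
    thus ?thesis using del_bounds[OF assms(2), of v t] by (simp add: Q_FS abs_le_iff)
  qed
next
  fix t :: nat assume h: "node_neighboring G G' \<and> node_subgraph G G'"
  then obtain S where S: "S \<subseteq> verts G'" "G = induced_sub G' S" unfolding node_subgraph_def by blast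
  hence vG: "verts G = S" unfolding induced_sub_def verts_def by simp
  have "\<not> (\<exists>v\<in>verts G. G' = delete_node G v)"
  proof
    assume "\<exists>v\<in>verts G. G' = delete_node G v"
    then obtain v where "v \<in> verts G" "G' = delete_node G v" by blast
    hence "verts G' = S - {v}" "v \<in> S" by (simp_all add: verts_del vG)
    thus False using S(1) by blast
  qed
  then obtain v where "v \<in> verts G'" "G = delete_node G' v"
    using h unfolding node_neighboring_def by blast
  thus "Q_del_N G' t \<le> Q_del_N G t" unfolding Q_FS using del_bounds[OF assms(2), of v t] by simp
qed

end
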